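(* Every dense subgroup of $\mathrm{SL}_2(\mathbb{Q}_p)$ contains two elements which generate a dense subgroup of $\mathrm{SL}_2(\mathbb{Q}_p)$.
   Context: $\mathrm{SL}_2(\mathbb{Q}_p)$ carries the subspace topology from $\mathbb{Q}_p^4$; $p$ is any prime. *)

theory Defs
  imports "HOL-Analysis.Analysis"
begin

definition padic_abs_rat :: "nat \<Rightarrow> rat \<Rightarrow> real" where
  "padic_abs_rat p q =
     (if q = 0 then 0
      else (case quotient_of q of (a, b) \<Rightarrow>
              real p ^ multiplicity (int p) b / real p ^ multiplicity (int p) a))"

text \<open>This characterises Q_p (the completion of Q w.r.t. the p-adic absolute value) up to
  isometric field isomorphism.\<close>
definition is_padic_field :: "nat \<Rightarrow> ('a::{field_char_0, metric_space} \<Rightarrow> real) \<Rightarrow> bool" where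
  "is_padic_field p N \<longleftrightarrow>
     (\<forall>x. 0 \<le> N x) \<and> (\<forall>x. N x = 0 \<longleftrightarrow> x = 0) \<and>
     (\<forall>x y. N (x * y) = N x * N y) \<and>
     (\<forall>x y. N (x + y) \<le> max (N x) (N y)) \<and>
     (\<forall>x y. dist x y = N (x - y)) \<and>
     (\<forall>q. N (of_rat q) = padic_abs_rat p q) \<and>
     closure (range (of_rat :: rat \<Rightarrow> 'a)) = UNIV \<and>
     complete (UNIV :: 'a set)"

text \<open>SL_2(K), as a subset of K^{2x2} = K^4 (product topology).\<close>
definition SL2 :: "('a::field ^ 2 ^ 2) set" where
  "SL2 = {A. det A = 1}"

definition is_subgroup_SL2 :: "('a::field ^ 2 ^ 2) set \<Rightarrow> bool" where
  "is_subgroup_SL2 H \<longleftrightarrow>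
     H \<subseteq> SL2 \<and> mat 1 \<in> H \<and> (\<forall>A\<in>H. \<forall>B\<in>H. A ** B \<in> H) \<and>
     (\<forall>A\<in>H. \<exists>B\<in>H. A ** B = mat 1)"

definition subgroup_generated_SL2 :: "('a::field ^ 2 ^ 2) set \<Rightarrow> ('a ^ 2 ^ 2) set" where
  "subgroup_generated_SL2 S = \<Inter>{K. is_subgroup_SL2 K \<and> S \<subseteq> K}"

end

theory Submission
  imports Defs "HOL-Computational_Algebra.Primes"
begin


definition mk :: "'a::field \<Rightarrow> 'a \<Rightarrow> 'a \<Rightarrow> 'a \<Rightarrow> 'a^2^2" where
  "mk x y z w = (\<chi> i j. if i = 1 then (if j = 1 then x else y) else (if j = 1 then z else w))"

lemma mk_nth [simp]: "mk x y z w $1$1 = x" "mk x y z w $1$2 = y" "mk x y z w $2$1 = z" "mk x y z w $2$2 = w"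
  by (simp_all add: mk_def)

lemma mk_eta: "A = mk (A$1$1) (A$1$2) (A$2$1) (A$2$2)"
  unfolding mk_def vec_eq_iff forall_2 by simp

lemma mk_eq_iff: "(mk x y z w = mk x' y' z' w') \<longleftrightarrow> x = x' \<and> y = y' \<and> z = z' \<and> w = w'"
  by (metis mk_nth)

lemma mk_mult: "mk x y z w ** mk x' y' z' w' = mk (x*x'+y*z') (x*y'+y*w') (z*x'+w*z') (z*y'+w*w')"
  by (subst mk_eta[of "mk x y z w ** mk x' y' z' w'"]) (simp add: matrix_matrix_mult_def sum_2)

lemma mat1_mk: "(mat 1 :: 'a::field^2^2) = mk 1 0 0 1"
  by (subst mk_eta) (simp add: mat_def)

lemma det_mk: "det (mk x y z w) = x*w - y*z"
  by (simp add: det_2)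

lemma mk_add: "mk x y z w + mk x' y' z' w' = mk (x+x') (y+y') (z+z') (w+w')"
  by (subst mk_eta[of "mk x y z w + _"]) simp

lemma mk_diff: "mk x y z w - mk x' y' z' w' = mk (x-x') (y-y') (z-z') (w-w')"
  by (subst mk_eta[of "mk x y z w - _"]) simp


locale pad =
  fixes p :: nat and N :: "'a::{field_char_0, metric_space} \<Rightarrow> real"
  assumes prm: "prime p" and pf: "is_padic_field p N"
begin

lemmas pfu = pf[unfolded is_padic_field_def]
lemma N_nonneg: "0 \<le> N x" using conjunct1[OF pfu] by blast
lemma N_zero_iff [simp]: "N x = 0 \<longleftrightarrow> x = 0" using conjunct1[OF conjunct2[OF pfu]] by blast
lemma N_mult: "N (x * y) = N x * N y" using conjunct1[OF conjunct2[OF conjunct2[OF pfu]]] by blast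
lemma N_ultra: "N (x + y) \<le> max (N x) (N y)" using conjunct1[OF conjunct2[OF conjunct2[OF conjunct2[OF pfu]]]] by blast
lemma dist_N: "dist x y = N (x - y)" using conjunct1[OF conjunct2[OF conjunct2[OF conjunct2[OF conjunct2[OF pfu]]]]] by blast
lemma N_rat: "N (of_rat q) = padic_abs_rat p q" using conjunct1[OF conjunct2[OF conjunct2[OF conjunct2[OF conjunct2[OF conjunct2[OF pfu]]]]]] by blast
lemma dense_rat: "closure (range (of_rat :: rat \<Rightarrow> 'a)) = UNIV" using conjunct1[OF conjunct2[OF conjunct2[OF conjunct2[OF conjunct2[OF conjunct2[OF conjunct2[OF pfu]]]]]]] .
lemma compl: "complete (UNIV :: 'a set)" using conjunct2[OF conjunct2[OF conjunct2[OF conjunct2[OF conjunct2[OF conjunct2[OF conjunct2[OF pfu]]]]]]] .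

lemma p_gt1: "p > 1" using prm prime_gt_1_nat by blast
lemma p_real: "real p > 1" using p_gt1 by simp

lemma nu: "\<not> is_unit (int p)" using prm by (metis not_prime_unit prime_nat_int_transfer)

lemma N_0 [simp]: "N 0 = 0" by simp

lemma N_1 [simp]: "N 1 = 1"
proof -
  have "N 1 = N 1 * N 1" using N_mult[of 1 1] by simp
  moreover have "N 1 \<noteq> 0" by simp
  ultimately show ?thesis by (metis mult_cancel_right1)
qed

lemma N_minus [simp]: "N (- x) = N x"
proof -
  have "N (-1) * N (-1) = 1" using N_mult[of "-1" "-1"] by simp
  hence "N (-1) ^ 2 = 1" by (simp add: power2_eq_square)
  hence "N (-1) = 1 \<or> N (-1) = -1" using power2_eq_1_iff by blast
  hence "N (-1) = 1" using N_nonneg[of "-1"] by linarith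
  thus ?thesis using N_mult[of "-1" x] by simp
qed

lemma N_sym: "N (x - y) = N (y - x)" by (metis N_minus minus_diff_eq)

lemma N_diff: "N (x - y) \<le> max (N x) (N y)"
  using N_ultra[of x "-y"] by simp

lemma N_tri: "N (x + y) \<le> N x + N y"
  using N_ultra[of x y] N_nonneg[of x] N_nonneg[of y] by linarith

lemma N_inverse: "N (inverse x) = inverse (N x)"
proof (cases "x = 0")
  case False
  then have "N x * N (inverse x) = 1" using N_mult[of x "inverse x"] by simp
  thus ?thesis by (metis inverse_unique)
qed simp

lemma N_divide: "N (x / y) = N x / N y"
  by (simp add: divide_inverse N_mult N_inverse)

lemma N_power: "N (x ^ n) = N x ^ n"
  by (induction n) (simp_all add: N_mult)

lemma N_strict: assumes "N x < N y" shows "N (x + y) = N y"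
proof -
  have "N y = N ((x + y) + (- x))" by simp
  also have "\<dots> \<le> max (N (x + y)) (N x)" using N_ultra by (metis N_minus)
  finally have "N y \<le> N (x+y)" using assms by linarith
  moreover have "N (x + y) \<le> N y" using N_ultra[of x y] assms by linarith
  ultimately show ?thesis by linarith
qed

lemma N_strict': assumes "N y < N x" shows "N (x + y) = N x"
  using N_strict[OF assms] by (simp add: add.commute)

lemma N_int: "N (of_int k) = (if k = 0 then 0 else 1 / real p ^ multiplicity (int p) k)"
proof -
  have "N (of_int k) = N (of_rat (of_int k))" by simp
  also have "\<dots> = padic_abs_rat p (of_int k)" by (rule N_rat)
  finally show ?thesis by (simp add: padic_abs_rat_def quotient_of_int)
qed

lemma N_int_le1: "N (of_int k) \<le> 1"
  unfolding N_int using p_real by (simp add: field_simps)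

lemma N_nat_le1: "N (of_nat k) \<le> 1"
  using N_int_le1[of "int k"] by simp

lemma N_int_coprime: "\<not> int p dvd k \<Longrightarrow> N (of_int k) = 1"
  unfolding N_int by (auto simp: not_dvd_imp_multiplicity_0)

lemma N_int_dvd: assumes "int p ^ m dvd k" shows "N (of_int k) \<le> 1 / real p ^ m"
proof (cases "k = 0")
  case False
  have "multiplicity (int p) k \<ge> m" by (rule multiplicity_geI[OF False nu assms])
  hence "real p ^ m \<le> real p ^ multiplicity (int p) k" using p_real
    by (intro power_increasing) auto
  thus ?thesis unfolding N_int using False p_real by (simp add: frac_le)
qed simp

lemma N_p: "N (of_nat p) = 1 / real p"
proof -
  have "multiplicity (int p) (int p) = 1"
    by (rule multiplicity_self) (use p_gt1 nu in auto)
  thus ?thesis using N_int[of "int p"] p_gt1 by simp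
qed

lemma N_p_pow: "N (of_nat p ^ k) = 1 / real p ^ k"
  by (simp add: N_power N_p power_one_over)

lemma N_cont: "N x = dist x 0" by (simp add: dist_N)

end


context pad begin

lemma N_pos: "x \<noteq> 0 \<Longrightarrow> N x > 0"
  using N_nonneg[of x] N_zero_iff[of x] by linarith

lemma small_pow: assumes "e > 0" shows "\<exists>k. 1 / real p ^ k < e"
proof -
  have "1 / real p < 1" using p_real by simp
  then obtain k where "(1 / real p) ^ k < e" using real_arch_pow_inv[OF assms] by blast
  thus ?thesis by (auto simp: power_one_over)
qed

lemma approx_int:
  assumes x: "N x \<le> 1"
  shows "\<exists>j < p ^ k. N (x - of_nat j) \<le> 1 / real p ^ k"
proof -
  have pk: "1 / real p ^ k > 0" using p_real by simp
  have "x \<in> closure (range (of_rat :: rat \<Rightarrow> 'a))" using dense_rat by simp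
  then obtain y where "y \<in> range (of_rat :: rat \<Rightarrow> 'a)" "dist y x < 1 / real p ^ k"
    using closure_approachable pk by metis
  then obtain q where yq: "y = of_rat q" and dq: "N (of_rat q - x) < 1 / real p ^ k"
    by (auto simp: dist_N)
  have pk1: "1 / real p ^ k \<le> 1" using p_real by simp
  have Nq: "N (of_rat q) \<le> 1"
  proof -
    have "N (of_rat q) = N ((of_rat q - x) + x)" by simp
    also have "\<dots> \<le> max (N (of_rat q - x)) (N x)" by (rule N_ultra)
    finally show ?thesis using dq pk1 x by linarith
  qed
  obtain a b where ab: "quotient_of q = (a, b)" by (cases "quotient_of q")
  have bpos: "b > 0" using quotient_of_denom_pos[OF ab] .
  have cop: "coprime a b" using quotient_of_coprime[OF ab] .
  have qab: "(of_rat q :: 'a) = of_int a / of_int b"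
    using quotient_of_div[OF ab] by (simp add: of_rat_divide)
  have ndvd: "\<not> int p dvd b"
  proof
    assume pb: "int p dvd b"
    have "\<not> int p dvd a"
    proof
      assume "int p dvd a"
      hence "is_unit (int p)" using pb cop by (meson coprime_common_divisor)
      thus False using nu by blast
    qed
    hence Na: "N (of_int a) = 1" by (rule N_int_coprime)
    have Nb: "N (of_int b) \<le> 1 / real p" using N_int_dvd[of 1 b] pb by simp
    have "(of_int b :: 'a) \<noteq> 0" using bpos by simp
    hence "N (of_int b) > 0" using N_pos by blast
    hence "N (of_rat q) \<ge> real p" using Na Nb p_real
      by (simp add: qab N_divide) (simp add: field_simps)
    thus False using Nq p_real by linarith
  qed
  have "coprime (int p) b"
    using ndvd prm by (simp add: prime_imp_coprime)
  hence "coprime b (int p ^ k)" by (simp add: coprime_commute)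
  hence "gcd b (int p ^ k) = 1" by simp
  then obtain u v where uv: "u * b + v * int p ^ k = 1" using bezout_int[of b "int p ^ k"] by metis
  define j0 where "j0 = (u * a) mod (int p ^ k)"
  have j0: "0 \<le> j0" "j0 < int p ^ k" unfolding j0_def using p_gt1 by auto
  have dv: "int p ^ k dvd (a - j0 * b)"
  proof -
    define d where "d = (u * a) div (int p ^ k)"
    have j0e: "j0 = u * a - int p ^ k * d" unfolding j0_def d_def
      by (metis minus_div_mult_eq_mod mult.commute)
    have "a - j0 * b = a * (1 - u * b) + int p ^ k * d * b"
      by (simp add: j0e algebra_simps)
    also have "1 - u * b = v * int p ^ k" using uv by linarith
    also have "a * (v * int p ^ k) + int p ^ k * d * b = int p ^ k * (a * v + d * b)"
      by (simp add: algebra_simps)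
    finally show ?thesis by simp
  qed
  define j where "j = nat j0"
  have jj: "int j = j0" unfolding j_def using j0 by simp
  have jlt: "j < p ^ k" using j0 jj by (metis of_nat_less_iff of_nat_power)
  have "(of_rat q :: 'a) - of_nat j = of_int (a - j0 * b) / of_int b"
  proof -
    have bnz: "(of_int b :: 'a) \<noteq> 0" using bpos by simp
    have "(of_nat j :: 'a) = of_int j0" using jj by (metis of_int_of_nat_eq)
    thus ?thesis unfolding qab using bnz by (simp add: field_simps)
  qed
  hence "N (of_rat q - of_nat j) \<le> 1 / real p ^ k"
    using N_int_dvd[OF dv] N_int_coprime[OF ndvd] by (simp add: N_divide)
  moreover have "N (x - of_nat j) \<le> max (N (x - of_rat q)) (N (of_rat q - of_nat j))"
    using N_ultra[of "x - of_rat q" "of_rat q - of_nat j"] by simp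
  moreover have "N (x - of_rat q) < 1 / real p ^ k" using dq N_sym by metis
  ultimately have "N (x - of_nat j) \<le> 1 / real p ^ k" by linarith
  thus ?thesis using jlt by blast
qed

lemma unit_ball_eq: "{x. N x \<le> 1} = cball (0::'a) 1"
  by (auto simp: cball_def dist_N N_sym)

lemma compact_unit_ball: "compact {x::'a. N x \<le> 1}"
proof -
  have cl: "closed {x::'a. N x \<le> 1}" unfolding unit_ball_eq by simp
  have "complete {x::'a. N x \<le> 1}" using complete_closed_subset[OF cl _ compl] by simp
  moreover have "\<forall>e>0. \<exists>K. finite K \<and> {x::'a. N x \<le> 1} \<subseteq> (\<Union>y\<in>K. ball y e)"
  proof (intro allI impI)
    fix e :: real assume "e > 0"
    then obtain k where k: "1 / real p ^ k < e" using small_pow by blast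
    have "{x::'a. N x \<le> 1} \<subseteq> (\<Union>y\<in>of_nat ` {..<p^k}. ball y e)"
    proof
      fix x :: 'a assume "x \<in> {x. N x \<le> 1}"
      then obtain j where "j < p^k" "N (x - of_nat j) \<le> 1 / real p ^ k" using approx_int by auto
      thus "x \<in> (\<Union>y\<in>of_nat ` {..<p^k}. ball y e)" using k
        by (auto simp: ball_def dist_N N_sym intro!: bexI[of _ "of_nat j"])
    qed
    thus "\<exists>K. finite K \<and> {x::'a. N x \<le> 1} \<subseteq> (\<Union>y\<in>K. ball y e)" by blast
  qed
  ultimately show ?thesis using compact_eq_totally_bounded by blast
qed

lemma tendsto_N: fixes f :: "'b \<Rightarrow> 'a" shows "(f \<longlongrightarrow> l) F \<longleftrightarrow> ((\<lambda>n. N (f n - l)) \<longlongrightarrow> 0) F"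
  by (subst tendsto_dist_iff) (simp add: dist_N)

lemma N_tendsto_0: fixes g h :: "'b \<Rightarrow> real" assumes "\<And>n. 0 \<le> g n" "\<And>n. g n \<le> h n" "(h \<longlongrightarrow> 0) F"
  shows "(g \<longlongrightarrow> 0) F"
  by (rule tendsto_sandwich[of "\<lambda>_. 0" g F h]) (use assms in auto)

lemma tendsto_add_N: fixes f g :: "'b \<Rightarrow> 'a" assumes "(f \<longlongrightarrow> l) F" "(g \<longlongrightarrow> m) F"
  shows "((\<lambda>n. f n + g n) \<longlongrightarrow> l + m) F"
proof -
  have a: "((\<lambda>n. N (f n - l)) \<longlongrightarrow> 0) F" "((\<lambda>n. N (g n - m)) \<longlongrightarrow> 0) F"
    using assms tendsto_N by auto
  show ?thesis unfolding tendsto_N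
  proof (rule N_tendsto_0)
    fix n
    show "N (f n + g n - (l + m)) \<le> N (f n - l) + N (g n - m)"
      using N_tri[of "f n - l" "g n - m"] by (simp add: algebra_simps)
  qed (use N_nonneg a in \<open>auto intro: tendsto_add_zero\<close>)
qed

lemma tendsto_minus_N: fixes f :: "'b \<Rightarrow> 'a" assumes "(f \<longlongrightarrow> l) F"
  shows "((\<lambda>n. - f n) \<longlongrightarrow> - l) F"
  using assms unfolding tendsto_N by (metis (no_types, lifting) N_minus ext minus_diff_eq minus_diff_minus)

lemma tendsto_diff_N: fixes f g :: "'b \<Rightarrow> 'a" assumes "(f \<longlongrightarrow> l) F" "(g \<longlongrightarrow> m) F"
  shows "((\<lambda>n. f n - g n) \<longlongrightarrow> l - m) F"
  using tendsto_add_N[OF assms(1) tendsto_minus_N[OF assms(2)]] by simp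

lemma tendsto_mult_N: fixes f g :: "'b \<Rightarrow> 'a" assumes "(f \<longlongrightarrow> l) F" "(g \<longlongrightarrow> m) F"
  shows "((\<lambda>n. f n * g n) \<longlongrightarrow> l * m) F"
proof -
  have a: "((\<lambda>n. N (f n - l)) \<longlongrightarrow> 0) F" "((\<lambda>n. N (g n - m)) \<longlongrightarrow> 0) F"
    using assms tendsto_N by auto
  show ?thesis unfolding tendsto_N
  proof (rule N_tendsto_0)
    fix n
    have e: "f n * g n - l * m = f n * (g n - m) + (f n - l) * m" by (simp add: algebra_simps)
    have "N (f n * g n - l * m) \<le> N (f n) * N (g n - m) + N (f n - l) * N m"
      unfolding e using N_tri N_mult by metis
    also have "\<dots> \<le> (N (f n - l) + N l) * N (g n - m) + N (f n - l) * N m"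
    proof -
      have "N (f n) \<le> N (f n - l) + N l" using N_tri[of "f n - l" l] by simp
      thus ?thesis using N_nonneg[of "g n - m"] by (simp add: mult_right_mono)
    qed
    finally show "N (f n * g n - l * m) \<le> (N (f n - l) + N l) * N (g n - m) + N (f n - l) * N m" .
  next
    show "((\<lambda>n. (N (f n - l) + N l) * N (g n - m) + N (f n - l) * N m) \<longlongrightarrow> 0) F"
      using a by (auto intro!: tendsto_eq_intros)
  qed (use N_nonneg in auto)
qed

lemma tendsto_const_N: "((\<lambda>n. c) \<longlongrightarrow> c) F" by simp

end


lemma mm_entry: "((A::'a::field^2^2) ** (B::'a^2^2)) $ i $ j = A$i$1 * B$1$j + A$i$2 * B$2$j"
  by (simp add: matrix_matrix_mult_def sum_2)

lemma mdiff_rdistrib: "((A::'a::field^2^2) - B) ** (C::'a^2^2) = A ** C - B ** C"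
  by (simp add: vec_eq_iff mm_entry algebra_simps)

lemma mdiff_ldistrib: "(C::'a::field^2^2) ** ((A::'a^2^2) - B) = C ** A - C ** B"
  by (simp add: vec_eq_iff mm_entry algebra_simps)

lemma madd_rdistrib: "((A::'a::field^2^2) + B) ** (C::'a^2^2) = A ** C + B ** C"
  by (simp add: vec_eq_iff mm_entry algebra_simps)

fun mpw :: "'a::field^2^2 \<Rightarrow> nat \<Rightarrow> 'a^2^2" where
  "mpw A 0 = mat 1"
| "mpw A (Suc n) = mpw A n ** A"

lemma mpw_add: "mpw A (m + n) = mpw A m ** mpw A n"
  by (induction n) (simp_all add: matrix_mul_assoc)

lemma mpw_mult: "mpw A (m * n) = mpw (mpw A m) n"
proof (induction n)
  case (Suc n)
  have "mpw A (m * Suc n) = mpw A (m * n + m)" by (simp add: algebra_simps)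
  also have "\<dots> = mpw A (m * n) ** mpw A m" by (rule mpw_add)
  finally show ?case using Suc by simp
qed simp

lemma mpw_conj:
  assumes "ginv ** g = mat 1" and that: "g ** ginv = mat 1"
  shows "mpw (g ** A ** ginv) n = g ** mpw A n ** ginv"
proof (induction n)
  case 0 thus ?case using that by simp
next
  case (Suc n)
  have "mpw (g ** A ** ginv) (Suc n) = (g ** mpw A n ** ginv) ** (g ** A ** ginv)" using Suc by simp
  also have "\<dots> = g ** mpw A n ** (ginv ** g) ** A ** ginv" by (simp add: matrix_mul_assoc)
  also have "\<dots> = g ** mpw A (Suc n) ** ginv" using assms by (simp add: matrix_mul_assoc)
  finally show ?case .
qed

lemma mpw_diag: "mpw (mk l 0 0 m) n = mk (l ^ n) 0 0 (m ^ n)"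
  by (induction n) (simp_all add: mat1_mk mk_mult mult.commute)

lemma mpw_unip: "mpw (mk 1 s 0 1) n = mk 1 (of_nat n * s) 0 1"
  by (induction n) (simp_all add: mat1_mk mk_mult algebra_simps)

definition smul :: "'a::field \<Rightarrow> 'a^2^2 \<Rightarrow> 'a^2^2" where
  "smul c A = (\<chi> i j. c * A$i$j)"

lemma smul_nth [simp]: "smul c A $ i $ j = c * A$i$j" by (simp add: smul_def)

context pad begin

definition mn :: "'a^2^2 \<Rightarrow> real" where
  "mn A = max (max (N (A$1$1)) (N (A$1$2))) (max (N (A$2$1)) (N (A$2$2)))"

lemma entry_le_mn: "N (A$i$j) \<le> mn A"
  unfolding mn_def using exhaust_2[of i] exhaust_2[of j] by auto

lemma mn_nonneg: "0 \<le> mn A" using entry_le_mn[of A 1 1] N_nonneg[of "A$1$1"] by linarith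

lemma mn_le: "(\<And>i j. N (A$i$j) \<le> c) \<Longrightarrow> mn A \<le> c"
  unfolding mn_def by auto

lemma mn_add: "mn (A + B) \<le> max (mn A) (mn B)"
proof (rule mn_le)
  fix i j
  have "N ((A + B)$i$j) \<le> max (N (A$i$j)) (N (B$i$j))" using N_ultra by simp
  thus "N ((A + B)$i$j) \<le> max (mn A) (mn B)" using entry_le_mn[of A i j] entry_le_mn[of B i j] by linarith
qed

lemma mn_mult: "mn (A ** B) \<le> mn A * mn B"
proof (rule mn_le)
  fix i j
  have "N ((A ** B)$i$j) \<le> max (N (A$i$1 * B$1$j)) (N (A$i$2 * B$2$j))" unfolding mm_entry by (rule N_ultra)
  also have "\<dots> \<le> mn A * mn B"
    using entry_le_mn[of A] entry_le_mn[of B] N_nonneg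
    by (simp add: N_mult mult_mono')
  finally show "N ((A ** B)$i$j) \<le> mn A * mn B" .
qed

lemma mn_one: "mn (mat 1) \<le> 1"
  by (rule mn_le) (simp add: mat_def)

lemma mn_mult_le1: "mn A \<le> 1 \<Longrightarrow> mn B \<le> c \<Longrightarrow> mn (A ** B) \<le> c"
proof -
  assume a: "mn A \<le> 1" "mn B \<le> c"
  have "mn A * mn B \<le> 1 * mn B" using a mn_nonneg[of B] by (intro mult_right_mono) auto
  thus ?thesis using mn_mult[of A B] a by linarith
qed

lemma mn_mult_le1': "mn B \<le> 1 \<Longrightarrow> mn A \<le> c \<Longrightarrow> mn (A ** B) \<le> c"
proof -
  assume a: "mn B \<le> 1" "mn A \<le> c"
  have "mn A * mn B \<le> mn A * 1" using a mn_nonneg[of A] by (intro mult_left_mono) auto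
  thus ?thesis using mn_mult[of A B] a by linarith
qed

lemma pow_expand:
  fixes M :: "'a^2^2"
  assumes Y: "mn (M - mat 1) \<le> d" and d: "0 \<le> d" "d \<le> 1"
  shows "mn (mpw M n - mat 1) \<le> d \<and> mn (mpw M n - mat 1 - smul (of_nat n) (M - mat 1)) \<le> d * d"
proof (induction n)
  case 0
  have "mpw M 0 - mat 1 - smul (of_nat 0) (M - mat 1) = 0" by (simp add: vec_eq_iff)
  moreover have "mn 0 = 0" unfolding mn_def by simp
  ultimately show ?case using d by simp
next
  case (Suc n)
  define Y where "Y = M - mat 1"
  define Mn where "Mn = mpw M n"
  have MY: "M = mat 1 + Y" unfolding Y_def by simp
  have IH1: "mn (Mn - mat 1) \<le> d" and IH2: "mn (Mn - mat 1 - smul (of_nat n) Y) \<le> d * d"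
    using Suc unfolding Y_def Mn_def by auto
  have Mn1: "mn Mn \<le> 1"
  proof -
    have "mn Mn = mn (mat 1 + (Mn - mat 1))" by simp
    also have "\<dots> \<le> max (mn (mat 1)) (mn (Mn - mat 1))" by (rule mn_add)
    finally show ?thesis using mn_one IH1 d by linarith
  qed
  have e1: "mpw M (Suc n) - mat 1 = (Mn - mat 1) + Mn ** Y"
    unfolding Mn_def by (simp add: MY matrix_add_ldistrib)
  have e2: "mpw M (Suc n) - mat 1 - smul (of_nat (Suc n)) Y = (Mn - mat 1 - smul (of_nat n) Y) + (Mn - mat 1) ** Y"
    unfolding Mn_def by (simp add: MY matrix_add_ldistrib mdiff_rdistrib vec_eq_iff algebra_simps)
  have "mn (Mn ** Y) \<le> d" using mn_mult_le1[OF Mn1] Y unfolding Y_def by simp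
  hence A: "mn (mpw M (Suc n) - mat 1) \<le> d" unfolding e1 using mn_add[of "Mn - mat 1" "Mn ** Y"] IH1 by linarith
  have "mn ((Mn - mat 1) ** Y) \<le> d * d"
    using mn_mult[of "Mn - mat 1" Y] IH1 Y mn_nonneg[of Y] mn_nonneg[of "Mn - mat 1"] d
    unfolding Y_def by (meson mult_mono order_trans)
  hence B: "mn (mpw M (Suc n) - mat 1 - smul (of_nat (Suc n)) Y) \<le> d * d"
    unfolding e2 using mn_add[of "Mn - mat 1 - smul (of_nat n) Y" "(Mn - mat 1) ** Y"] IH2 by linarith
  show ?case using A B unfolding Y_def by simp
qed

lemma pow_p_step:
  fixes M :: "'a^2^2"
  assumes Y: "mn (M - mat 1) \<le> d" and y12: "N ((M - mat 1)$1$2) = d" and y21: "N ((M - mat 1)$2$1) = d"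
    and d: "0 < d" "d < 1 / real p"
  shows "mn (mpw M p - mat 1) \<le> d / real p \<and> N ((mpw M p - mat 1)$1$2) = d / real p
    \<and> N ((mpw M p - mat 1)$2$1) = d / real p"
proof -
  have d1: "d \<le> 1" using d p_real by (smt (verit) divide_le_eq_1_pos)
  define Y where "Y = M - mat 1"
  define R where "R = mpw M p - mat 1 - smul (of_nat p) Y"
  have R: "mn R \<le> d * d" using pow_expand[OF Y _ d1] d unfolding R_def Y_def by simp
  have dd: "d * d < d / real p" using d p_real by (simp add: field_simps)
  have ent: "(mpw M p - mat 1)$i$j = of_nat p * Y$i$j + R$i$j" for i j
    unfolding R_def by simp
  have NpY: "N (of_nat p * Y$i$j) = N (Y$i$j) / real p" for i j
    by (simp add: N_mult N_p)
  have NR: "N (R$i$j) < d / real p" for i j using entry_le_mn[of R i j] R dd by linarith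
  have o12: "N ((mpw M p - mat 1)$1$2) = d / real p"
    unfolding ent using N_strict'[of "R$1$2" "of_nat p * Y$1$2"] NR NpY y12 unfolding Y_def by simp
  have o21: "N ((mpw M p - mat 1)$2$1) = d / real p"
    unfolding ent using N_strict'[of "R$2$1" "of_nat p * Y$2$1"] NR NpY y21 unfolding Y_def by simp
  have "mn (mpw M p - mat 1) \<le> d / real p"
  proof (rule mn_le)
    fix i j
    have "N (of_nat p * Y$i$j) \<le> d / real p" unfolding NpY
      using entry_le_mn[of Y i j] Y p_real unfolding Y_def by (simp add: divide_right_mono)
    thus "N ((mpw M p - mat 1)$i$j) \<le> d / real p" unfolding ent
      using N_ultra[of "of_nat p * Y$i$j" "R$i$j"] NR[of i j] by linarith
  qed
  thus ?thesis using o12 o21 by simp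
qed

lemma pow_p_iter:
  fixes M :: "'a^2^2"
  assumes Y: "mn (M - mat 1) \<le> d" and y12: "N ((M - mat 1)$1$2) = d" and y21: "N ((M - mat 1)$2$1) = d"
    and d: "0 < d" "d < 1 / real p"
  shows "mn (mpw M (p^m) - mat 1) \<le> d / real p ^ m \<and> N ((mpw M (p^m) - mat 1)$1$2) = d / real p ^ m
    \<and> N ((mpw M (p^m) - mat 1)$2$1) = d / real p ^ m"
proof (induction m)
  case 0 thus ?case using assms by simp
next
  case (Suc m)
  have pm: "real p ^ m \<ge> 1" using p_real by simp
  have a: "0 < d / real p ^ m" using d p_real by simp
  have "d * 1 \<le> d * real p ^ m" using pm d by (intro mult_left_mono) auto
  moreover have "real p ^ m > 0" using p_real by simp
  ultimately have "d / real p ^ m \<le> d" by (simp add: pos_divide_le_eq)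
  hence b: "d / real p ^ m < 1 / real p" using d by linarith
  have "mpw M (p ^ Suc m) = mpw (mpw M (p^m)) p" by (simp add: mpw_mult[symmetric] mult.commute)
  thus ?case using pow_p_step[of "mpw M (p^m)" "d / real p ^ m", OF _ _ _ a b] Suc
    by (simp add: field_simps)
qed

end


context pad begin

lemma entry_tendsto: "(X \<longlongrightarrow> L) F \<Longrightarrow> ((\<lambda>n. X n $ i $ j) \<longlongrightarrow> L $ i $ j) F"
  by (intro tendsto_vec_nth)

lemma mat_tendstoI:
  fixes X :: "'b \<Rightarrow> 'a^2^2"
  assumes "\<And>i j. ((\<lambda>n. X n $ i $ j) \<longlongrightarrow> L $ i $ j) F"
  shows "(X \<longlongrightarrow> L) F"
  by (intro vec_tendstoI assms)

lemma mmult_tendsto: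
  fixes X Y :: "'b \<Rightarrow> 'a^2^2"
  assumes "(X \<longlongrightarrow> A) F" "(Y \<longlongrightarrow> B) F"
  shows "((\<lambda>n. X n ** Y n) \<longlongrightarrow> A ** B) F"
proof (rule mat_tendstoI)
  fix i j
  have e: "\<And>k l. ((\<lambda>n. X n $ k $ l) \<longlongrightarrow> A $ k $ l) F" "\<And>k l. ((\<lambda>n. Y n $ k $ l) \<longlongrightarrow> B $ k $ l) F"
    using assms entry_tendsto by blast+
  show "((\<lambda>n. (X n ** Y n) $ i $ j) \<longlongrightarrow> (A ** B) $ i $ j) F"
    unfolding mm_entry by (intro tendsto_add_N tendsto_mult_N e)
qed

lemma mk_tendsto:
  fixes x y z w :: "'b \<Rightarrow> 'a"
  assumes "(x \<longlongrightarrow> x0) F" "(y \<longlongrightarrow> y0) F" "(z \<longlongrightarrow> z0) F" "(w \<longlongrightarrow> w0) F"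
  shows "((\<lambda>n. mk (x n) (y n) (z n) (w n)) \<longlongrightarrow> mk x0 y0 z0 w0) F"
proof (rule mat_tendstoI)
  fix i j :: 2
  show "((\<lambda>n. mk (x n) (y n) (z n) (w n) $ i $ j) \<longlongrightarrow> mk x0 y0 z0 w0 $ i $ j) F"
    using exhaust_2[of i] exhaust_2[of j] assms by auto
qed

lemma N_sub_tendsto: assumes "(f \<longlongrightarrow> l) F" shows "((\<lambda>n. N (f n)) \<longlongrightarrow> N l) F"
  using tendsto_dist[OF assms tendsto_const[of 0]] by (simp add: N_cont)

lemma pinv_tendsto: "(\<lambda>n. c / real p ^ n) \<longlonglongrightarrow> 0"
proof -
  have "(\<lambda>n. inverse (real p ^ n)) \<longlonglongrightarrow> 0" using LIMSEQ_inverse_realpow_zero p_real by blast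
  hence "(\<lambda>n. c * inverse (real p ^ n)) \<longlonglongrightarrow> c * 0" by (intro tendsto_mult tendsto_const)
  thus ?thesis by (simp add: divide_inverse)
qed

lemma limit_unip:
  fixes G :: "('a^2^2) set" and W :: "nat \<Rightarrow> 'a^2^2" and d :: real
  assumes gg: "g ** gi = mat 1"
    and WG: "\<And>n. W n \<in> G"
    and d: "0 < d" and e: "N e = d"
    and e11: "\<And>n. N ((gi ** W n ** g)$1$1 - 1) \<le> d / real p ^ n"
    and e22: "\<And>n. N ((gi ** W n ** g)$2$2 - 1) \<le> d / real p ^ n"
    and e21: "\<And>n. N ((gi ** W n ** g)$2$1) \<le> d / real p ^ n"
    and e12: "\<And>n. N ((gi ** W n ** g)$1$2) = d"
  shows "\<exists>s0. s0 \<noteq> 0 \<and> g ** mk 1 s0 0 1 ** gi \<in> closure G"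
proof -
  define V where "V n = gi ** W n ** g" for n
  have enz: "e \<noteq> 0" using e d by auto
  define u where "u n = V n $1$2 / e" for n
  have uB: "\<forall>n. u n \<in> {x. N x \<le> 1}" unfolding u_def using e12 e d by (simp add: N_divide V_def)
  obtain l r where l: "l \<in> {x. N x \<le> 1}" and r: "strict_mono r" and lim: "(u \<circ> r) \<longlonglongrightarrow> l"
    using seq_compactE[OF compact_imp_seq_compact[OF compact_unit_ball] uB] by blast
  have "(\<lambda>n. N ((u \<circ> r) n)) \<longlonglongrightarrow> N l" by (rule N_sub_tendsto[OF lim])
  moreover have "\<And>n. N ((u \<circ> r) n) = 1" unfolding u_def using e12 e d by (simp add: N_divide V_def)
  ultimately have "N l = 1" using LIMSEQ_const_iff by (metis (no_types, lifting) LIMSEQ_unique ext tendsto_const)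
  hence lnz: "l \<noteq> 0" by auto
  define s0 where "s0 = e * l"
  have s0: "s0 \<noteq> 0" unfolding s0_def using lnz enz by simp
  have bnd: "\<And>n. d / real p ^ (r n) \<le> d / real p ^ n"
  proof -
    fix n
    have "n \<le> r n" using seq_suble[OF r] by blast
    hence "real p ^ n \<le> real p ^ r n" using p_real by (intro power_increasing) auto
    thus "d / real p ^ (r n) \<le> d / real p ^ n" using d p_real by (intro divide_left_mono) auto
  qed
  have t0: "(\<lambda>n. d / real p ^ n) \<longlonglongrightarrow> 0" by (rule pinv_tendsto)
  have c11: "(\<lambda>n. V (r n) $1$1) \<longlonglongrightarrow> 1" unfolding tendsto_N
  proof (rule N_tendsto_0[OF N_nonneg _ t0])
    fix n
    show "N (V (r n) $1$1 - 1) \<le> d / real p ^ n" using e11[of "r n"] bnd[of n] unfolding V_def by (simp only: diff_zero; linarith)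
  qed
  have c22: "(\<lambda>n. V (r n) $2$2) \<longlonglongrightarrow> 1" unfolding tendsto_N
  proof (rule N_tendsto_0[OF N_nonneg _ t0])
    fix n
    show "N (V (r n) $2$2 - 1) \<le> d / real p ^ n" using e22[of "r n"] bnd[of n] unfolding V_def by (simp only: diff_zero; linarith)
  qed
  have c21: "(\<lambda>n. V (r n) $2$1) \<longlonglongrightarrow> 0" unfolding tendsto_N
  proof (rule N_tendsto_0[OF N_nonneg _ t0])
    fix n
    show "N (V (r n) $2$1 - 0) \<le> d / real p ^ n" using e21[of "r n"] bnd[of n] unfolding V_def by (simp only: diff_zero; linarith)
  qed
  have c12: "(\<lambda>n. V (r n) $1$2) \<longlonglongrightarrow> s0"
  proof -
    have "(\<lambda>n. e * (u \<circ> r) n) \<longlonglongrightarrow> e * l" by (intro tendsto_mult_N tendsto_const lim)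
    moreover have "\<And>n. e * (u \<circ> r) n = V (r n) $1$2" unfolding u_def using enz by simp
    ultimately show ?thesis unfolding s0_def by simp
  qed
  have "(\<lambda>n. mk (V (r n) $1$1) (V (r n) $1$2) (V (r n) $2$1) (V (r n) $2$2)) \<longlonglongrightarrow> mk 1 s0 0 1"
    by (intro mk_tendsto c11 c12 c21 c22)
  moreover have "(\<lambda>n. mk (V (r n) $1$1) (V (r n) $1$2) (V (r n) $2$1) (V (r n) $2$2)) = (\<lambda>n. V (r n))"
    by (rule ext) (rule mk_eta[symmetric])
  ultimately have "(\<lambda>n. V (r n)) \<longlonglongrightarrow> mk 1 s0 0 1" by simp
  hence "(\<lambda>n. g ** V (r n) ** gi) \<longlonglongrightarrow> g ** mk 1 s0 0 1 ** gi"
    by (intro mmult_tendsto tendsto_const)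
  moreover have "g ** V (r n) ** gi = W (r n)" for n
    unfolding V_def by (metis gg matrix_mul_assoc matrix_mul_lid matrix_mul_rid)
  ultimately have "(\<lambda>n. W (r n)) \<longlonglongrightarrow> g ** mk 1 s0 0 1 ** gi" by simp
  hence "g ** mk 1 s0 0 1 ** gi \<in> closure G"
    by (intro iffD2[OF closure_sequential] exI[of _ "\<lambda>n. W (r n)"]) (simp add: WG)
  thus ?thesis using s0 by blast
qed

end


lemma sl2_decomp:
  fixes x y z w :: "'a::field"
  assumes "x * w - y * z = 1"
  shows "\<exists>e a b c. mk x y z w = mk 1 0 e 1 ** mk 1 a 0 1 ** mk 1 0 b 1 ** mk 1 c 0 1"
proof (cases "z = 0")
  case False
  have "mk x y z w = mk 1 0 0 1 ** mk 1 ((x - 1) / z) 0 1 ** mk 1 0 z 1 ** mk 1 ((w - 1) / z) 0 1"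
    using False assms by (simp add: mk_mult field_simps; simp add: algebra_simps)
  thus ?thesis by blast
next
  case True
  hence xnz: "x \<noteq> 0" using assms by auto
  have wx: "w = 1 / x" using True xnz assms by (simp add: field_simps)
  have "mk x y z w = mk 1 0 (-1) 1 ** mk 1 ((x - 1) / x) 0 1 ** mk 1 0 x 1 ** mk 1 ((y + w - 1) / x) 0 1"
    using True xnz wx by (simp add: mk_mult field_simps; simp add: algebra_simps)
  thus ?thesis by blast
qed

context pad begin

lemma closure_mult:
  fixes G :: "('a^2^2) set"
  assumes Gm: "\<And>X Y. X \<in> G \<Longrightarrow> Y \<in> G \<Longrightarrow> X ** Y \<in> G"
    and A: "A \<in> closure G" and B: "B \<in> closure G"
  shows "A ** B \<in> closure G"
proof -
  obtain f where f: "\<forall>n. f n \<in> G" "f \<longlonglongrightarrow> A" using A closure_sequential by blast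
  obtain h where h: "\<forall>n. h n \<in> G" "h \<longlonglongrightarrow> B" using B closure_sequential by blast
  have "(\<lambda>n. f n ** h n) \<longlonglongrightarrow> A ** B" by (intro mmult_tendsto f h)
  moreover have "\<forall>n. f n ** h n \<in> G" using f h Gm by blast
  ultimately show ?thesis
    by (intro iffD2[OF closure_sequential] exI[of _ "\<lambda>n. f n ** h n"]) simp
qed

lemma full_T:
  fixes G :: "('a^2^2) set"
  assumes Gm: "\<And>X Y. X \<in> G \<Longrightarrow> Y \<in> G \<Longrightarrow> X ** Y \<in> G"
    and G1: "mat 1 \<in> G"
    and gg: "g ** gi = mat 1" and gg': "gi ** g = mat 1"
    and hG: "h \<in> G" and hiG: "hi \<in> G"
    and hd: "gi ** h ** g = mk lam 0 0 mu" and hid: "gi ** hi ** g = mk mu 0 0 lam"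
    and lm: "lam * mu = 1" and Nl: "N lam = real p"
    and s0: "s0 \<noteq> 0" and s0in: "g ** mk 1 s0 0 1 ** gi \<in> closure G"
  shows "g ** mk 1 x 0 1 ** gi \<in> closure G"
proof -
  define T where "T s \<longleftrightarrow> g ** mk 1 s 0 1 ** gi \<in> closure G" for s
  have cjm: "(g ** X ** gi) ** (g ** Y ** gi) = g ** (X ** Y) ** gi" for X Y
  proof -
    have "(g ** X ** gi) ** (g ** Y ** gi) = g ** X ** (gi ** g) ** Y ** gi" by (simp add: matrix_mul_assoc)
    thus ?thesis using gg' by (simp add: matrix_mul_assoc)
  qed
  have cjback: "g ** (gi ** Z ** g) ** gi = Z" for Z
  proof -
    have "g ** (gi ** Z ** g) ** gi = (g ** gi) ** Z ** (g ** gi)" by (simp add: matrix_mul_assoc)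
    thus ?thesis using gg by simp
  qed
  have clm: "A \<in> closure G \<Longrightarrow> B \<in> closure G \<Longrightarrow> A ** B \<in> closure G" for A B
    by (rule closure_mult[OF Gm])
  have T0: "T 0" unfolding T_def using gg G1 closure_subset by (auto simp: mat1_mk[symmetric])
  have Tadd: "T s \<Longrightarrow> T t \<Longrightarrow> T (s + t)" for s t
  proof -
    assume "T s" "T t"
    hence "(g ** mk 1 s 0 1 ** gi) ** (g ** mk 1 t 0 1 ** gi) \<in> closure G" unfolding T_def by (rule clm)
    thus "T (s + t)" unfolding T_def cjm by (simp add: mk_mult add.commute)
  qed
  have Tnat: "T s \<Longrightarrow> T (of_nat j * s)" for s j
  proof (induction j)
    case 0 thus ?case using T0 by simp
  next
    case (Suc j)
    hence "T (of_nat j * s + s)" using Tadd by blast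
    thus ?case by (simp add: algebra_simps)
  qed
  have hc: "h \<in> closure G" "hi \<in> closure G" using hG hiG closure_subset by auto
  have Tlam: "T s \<Longrightarrow> T (lam * lam * s)" for s
  proof -
    assume "T s"
    hence "h ** (g ** mk 1 s 0 1 ** gi) ** hi \<in> closure G" unfolding T_def using hc clm by blast
    moreover have "h = g ** mk lam 0 0 mu ** gi" using cjback[of h] hd by simp
    moreover have "hi = g ** mk mu 0 0 lam ** gi" using cjback[of hi] hid by simp
    ultimately have "g ** (mk lam 0 0 mu ** mk 1 s 0 1 ** mk mu 0 0 lam) ** gi \<in> closure G"
      by (simp add: cjm)
    moreover have "mk lam 0 0 mu ** mk 1 s 0 1 ** mk mu 0 0 lam = mk 1 (lam * lam * s) 0 1"
      using lm by (simp add: mk_mult algebra_simps)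
    ultimately show "T (lam * lam * s)" unfolding T_def by simp
  qed
  have Tpow: "T s \<Longrightarrow> T (lam ^ (2 * n) * s)" for s n
  proof (induction n)
    case 0 thus ?case by simp
  next
    case (Suc n)
    hence "T (lam * lam * (lam ^ (2 * n) * s))" using Tlam by blast
    thus ?case by (simp add: algebra_simps power_add power_mult_distrib power2_eq_square)
  qed
  have Tlim: "(\<And>k. T (s k)) \<Longrightarrow> s \<longlonglongrightarrow> t \<Longrightarrow> T t" for s t
  proof -
    assume a: "\<And>k. T (s k)" "s \<longlonglongrightarrow> t"
    have "(\<lambda>k. mk 1 (s k) 0 1) \<longlonglongrightarrow> mk 1 t 0 1" by (intro mk_tendsto tendsto_const a)
    hence L1: "(\<lambda>k. g ** mk 1 (s k) 0 1 ** gi) \<longlonglongrightarrow> g ** mk 1 t 0 1 ** gi"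
      by (intro mmult_tendsto tendsto_const)
    have L2: "\<And>k. g ** mk 1 (s k) 0 1 ** gi \<in> closure G" using a(1) unfolding T_def by blast
    show "T t" unfolding T_def using closed_sequentially[OF closed_closure L2 L1] .
  qed
  show ?thesis
  proof (cases "x = 0")
    case True thus ?thesis using T0 unfolding T_def by simp
  next
    case False
    define d where "d = N s0"
    have d: "d > 0" unfolding d_def using s0 N_pos by blast
    obtain m where m: "N x / d < real p ^ m" using real_arch_pow[OF p_real] by blast
    have lnz: "lam \<noteq> 0" using lm by auto
    define y where "y = x / (lam ^ (2 * m) * s0)"
    have pm: "real p ^ m \<le> real p ^ (2 * m)" using p_real by (intro power_increasing) auto
    have Ny: "N y \<le> 1"
    proof -
      have "N y = N x / (real p ^ (2 * m) * d)" unfolding y_def d_def by (simp add: N_divide N_mult N_power Nl)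
      also have "\<dots> \<le> 1"
      proof -
        have "N x < real p ^ m * d" using m d by (simp add: divide_less_eq)
        also have "\<dots> \<le> real p ^ (2 * m) * d" using pm d by (intro mult_right_mono) auto
        finally show ?thesis using d p_real by simp
      qed
      finally show ?thesis .
    qed
    have "\<forall>k. \<exists>j. N (y - of_nat j) \<le> 1 / real p ^ k" using approx_int[OF Ny] by blast
    then obtain jf where jf: "\<And>k. N (y - of_nat (jf k)) \<le> 1 / real p ^ k" by metis
    have conv: "(\<lambda>k. of_nat (jf k) * s0) \<longlonglongrightarrow> y * s0" unfolding tendsto_N
    proof (rule N_tendsto_0[OF N_nonneg _ pinv_tendsto[of d]])
      fix k
      have "N (of_nat (jf k) * s0 - y * s0) = N (y - of_nat (jf k)) * d"
        unfolding d_def by (simp add: N_mult[symmetric] algebra_simps N_sym)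
      also have "\<dots> \<le> 1 / real p ^ k * d" using jf d by (intro mult_right_mono) auto
      finally show "N (of_nat (jf k) * s0 - y * s0) \<le> d / real p ^ k" by simp
    qed
    have "T s0" unfolding T_def by (rule s0in)
    hence "T (y * s0)" using Tlim[OF _ conv] Tnat by blast
    hence "T (lam ^ (2 * m) * (y * s0))" by (rule Tpow)
    moreover have "lam ^ (2 * m) * (y * s0) = x" unfolding y_def using lnz s0 by (simp add: field_simps)
    ultimately show ?thesis unfolding T_def by simp
  qed
qed

end


lemma mpw_in: "(\<And>X Y. X \<in> G \<Longrightarrow> Y \<in> G \<Longrightarrow> X ** Y \<in> G) \<Longrightarrow> mat 1 \<in> G \<Longrightarrow> A \<in> G \<Longrightarrow> mpw A n \<in> G"
  by (induction n) auto

lemma conj3: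
  assumes "g ** gi = (mat 1 :: 'a::field^2^2)"
  shows "gi ** (X ** Y ** Z) ** g = (gi ** X ** g) ** (gi ** Y ** g) ** (gi ** Z ** g)"
proof -
  have "(gi ** X ** g) ** (gi ** Y ** g) ** (gi ** Z ** g) = gi ** X ** (g ** gi) ** Y ** (g ** gi) ** Z ** g"
    by (simp add: matrix_mul_assoc)
  thus ?thesis using assms by (simp add: matrix_mul_assoc)
qed

lemma conj_back:
  assumes "g ** gi = (mat 1 :: 'a::field^2^2)"
  shows "g ** (gi ** Z ** g) ** gi = Z"
proof -
  have "g ** (gi ** Z ** g) ** gi = (g ** gi) ** Z ** (g ** gi)" by (simp add: matrix_mul_assoc)
  thus ?thesis using assms by simp
qed

lemma conj_mult:
  assumes "gi ** g = (mat 1 :: 'a::field^2^2)"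
  shows "(g ** X ** gi) ** (g ** Y ** gi) = g ** (X ** Y) ** gi"
proof -
  have "(g ** X ** gi) ** (g ** Y ** gi) = g ** X ** (gi ** g) ** Y ** gi" by (simp add: matrix_mul_assoc)
  thus ?thesis using assms by (simp add: matrix_mul_assoc)
qed

context pad begin

lemma main_setup:
  fixes G :: "('a^2^2) set"
  assumes Gm: "\<And>X Y. X \<in> G \<Longrightarrow> Y \<in> G \<Longrightarrow> X ** Y \<in> G"
    and G1: "mat 1 \<in> G"
    and gg: "g ** gi = mat 1" and gg': "gi ** g = mat 1"
    and aG: "a \<in> G" and aiG: "ai \<in> G"
    and ad: "gi ** a ** g = mk lam 0 0 mu" and aid: "gi ** ai ** g = mk mu 0 0 lam"
    and lm: "lam * mu = 1" and Nl: "N lam = real p"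
    and bG: "b \<in> G"
    and C1: "mn (gi ** b ** g - mat 1) \<le> d"
    and C12: "N ((gi ** b ** g - mat 1)$1$2) = d"
    and C21: "N ((gi ** b ** g - mat 1)$2$1) = d"
    and d: "0 < d" "d < 1 / real p"
  shows "SL2 \<subseteq> closure G"
proof -
  define C where "C = gi ** b ** g"
  define Cm where "Cm m = mpw C (p ^ m)" for m
  have Cm: "mn (Cm m - mat 1) \<le> d / real p ^ m \<and> N ((Cm m - mat 1)$1$2) = d / real p ^ m
    \<and> N ((Cm m - mat 1)$2$1) = d / real p ^ m" for m
    unfolding Cm_def C_def using pow_p_iter[OF C1 C12 C21 d] by blast
  have Nmu: "N mu = 1 / real p" using lm Nl N_mult[of lam mu] p_real by (simp add: field_simps)
  have lmn: "lam ^ n * mu ^ n = 1" for n by (metis lm power_mult_distrib power_one)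
  have lmn2: "lam ^ n * (mu ^ n * x) = x" "mu ^ n * (lam ^ n * x) = x" for n x
    using lmn[of n] by (metis mult.assoc mult_1 mult.commute)+
  have conjpow: "gi ** mpw X n ** g = mpw (gi ** X ** g) n" for X n
    using mpw_conj[of g gi X n] gg gg' by simp
  have pos: "real p ^ k > 0" for k using p_real by simp
  have dle: "d / real p ^ (2 * n) \<le> d / real p ^ n" for n
    using p_real d by (intro divide_left_mono power_increasing) auto
  have E11: "N ((Cm (2*n))$1$1 - 1) \<le> d / real p ^ n" for n
    using entry_le_mn[of "Cm (2*n) - mat 1" 1 1] Cm[of "2*n"] dle[of n] by (simp add: mat_def) 
  have E22: "N ((Cm (2*n))$2$2 - 1) \<le> d / real p ^ n" for n
    using entry_le_mn[of "Cm (2*n) - mat 1" 2 2] Cm[of "2*n"] dle[of n] by (simp add: mat_def)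
  have E12: "N ((Cm (2*n))$1$2) = d / real p ^ (2*n)" for n
    using Cm[of "2*n"] by (simp add: mat_def)
  have E21: "N ((Cm (2*n))$2$1) = d / real p ^ (2*n)" for n
    using Cm[of "2*n"] by (simp add: mat_def)
  have Nl2: "N (lam ^ n * lam ^ n) = real p ^ (2*n)" for n by (simp add: N_mult N_power Nl power_add[symmetric] mult_2)
  have Nm2: "N (mu ^ n * mu ^ n) = 1 / real p ^ (2*n)" for n
    by (simp add: N_mult N_power Nmu power_add[symmetric] mult_2 power_one_over)
  define W where "W n = mpw a n ** mpw b (p ^ (2*n)) ** mpw ai n" for n
  have mG: "\<And>X k. X \<in> G \<Longrightarrow> mpw X k \<in> G" by (rule mpw_in[OF Gm G1])
  have WG: "W n \<in> G" for n unfolding W_def using Gm[OF Gm[OF mG[OF aG] mG[OF bG]] mG[OF aiG]] .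
  have Wc: "gi ** W n ** g = mk (lam ^ n) 0 0 (mu ^ n) ** Cm (2*n) ** mk (mu ^ n) 0 0 (lam ^ n)" for n
    unfolding W_def Cm_def C_def conj3[OF gg] conjpow ad aid mpw_diag ..
  have We: "gi ** W n ** g = mk ((Cm (2*n))$1$1) (lam ^ n * lam ^ n * (Cm (2*n))$1$2)
      (mu ^ n * mu ^ n * (Cm (2*n))$2$1) ((Cm (2*n))$2$2)" for n
  proof -
    have "gi ** W n ** g = mk (lam ^ n) 0 0 (mu ^ n) ** mk ((Cm (2*n))$1$1) ((Cm (2*n))$1$2)
        ((Cm (2*n))$2$1) ((Cm (2*n))$2$2) ** mk (mu ^ n) 0 0 (lam ^ n)"
      unfolding Wc by (subst (2) mk_eta) (rule refl)
    also have "\<dots> = mk ((Cm (2*n))$1$1) (lam ^ n * lam ^ n * (Cm (2*n))$1$2)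
      (mu ^ n * mu ^ n * (Cm (2*n))$2$1) ((Cm (2*n))$2$2)"
      using lmn[of n] by (simp add: mk_mult algebra_simps lmn2)
    finally show ?thesis .
  qed
  have up0: "\<exists>s0. s0 \<noteq> 0 \<and> g ** mk 1 s0 0 1 ** gi \<in> closure G"
  proof (rule limit_unip[OF gg WG d(1) C12])
    fix n
    show "N ((gi ** W n ** g)$1$1 - 1) \<le> d / real p ^ n" using E11[of n] by (simp add: We)
    show "N ((gi ** W n ** g)$2$2 - 1) \<le> d / real p ^ n" using E22[of n] by (simp add: We)
    have "N ((gi ** W n ** g)$2$1) = d / real p ^ (2*n) / real p ^ (2*n)"
      using E21[of n] Nm2[of n] by (simp add: We N_mult)
    also have "\<dots> \<le> d / real p ^ (2*n)" using pos[of "2*n"] d p_real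
      by (simp add: divide_le_eq one_le_power)
    finally show "N ((gi ** W n ** g)$2$1) \<le> d / real p ^ n" using dle[of n] by linarith
    show "N ((gi ** W n ** g)$1$2) = d" using E12[of n] Nl2[of n] pos[of "2*n"]
      by (simp add: We N_mult)
  qed
  then obtain s0 where s0: "s0 \<noteq> 0" "g ** mk 1 s0 0 1 ** gi \<in> closure G" by blast
  have UP: "g ** mk 1 x 0 1 ** gi \<in> closure G" for x
    by (rule full_T[OF Gm G1 gg gg' aG aiG ad aid lm Nl s0])
  define w :: "'a^2^2" where "w = mk 0 1 1 0"
  have ww: "w ** w = mat 1" unfolding w_def by (simp add: mk_mult mat1_mk)
  have wconj: "w ** mk x y z t ** w = mk t z y x" for x y z t unfolding w_def by (simp add: mk_mult)
  define g' where "g' = g ** w"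
  define gi' where "gi' = w ** gi"
  have gg2: "g' ** gi' = mat 1" unfolding g'_def gi'_def
    by (metis gg matrix_mul_assoc matrix_mul_rid ww)
  have gg2': "gi' ** g' = mat 1" unfolding g'_def gi'_def
    by (metis gg' matrix_mul_assoc matrix_mul_rid ww)
  have c2: "gi' ** X ** g' = w ** (gi ** X ** g) ** w" for X
    unfolding g'_def gi'_def by (simp add: matrix_mul_assoc)
  have ad2: "gi' ** ai ** g' = mk lam 0 0 mu" unfolding c2 aid wconj ..
  have aid2: "gi' ** a ** g' = mk mu 0 0 lam" unfolding c2 ad wconj ..
  define W' where "W' n = mpw ai n ** mpw b (p ^ (2*n)) ** mpw a n" for n
  have WG': "W' n \<in> G" for n unfolding W'_def using Gm[OF Gm[OF mG[OF aiG] mG[OF bG]] mG[OF aG]] .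
  have We': "gi' ** W' n ** g' = mk ((Cm (2*n))$2$2) (lam ^ n * lam ^ n * (Cm (2*n))$2$1)
      (mu ^ n * mu ^ n * (Cm (2*n))$1$2) ((Cm (2*n))$1$1)" for n
  proof -
    have "gi ** W' n ** g = mk (mu ^ n) 0 0 (lam ^ n) ** Cm (2*n) ** mk (lam ^ n) 0 0 (mu ^ n)"
      unfolding W'_def Cm_def C_def conj3[OF gg] conjpow ad aid mpw_diag ..
    also have "\<dots> = mk (mu ^ n) 0 0 (lam ^ n) ** mk ((Cm (2*n))$1$1) ((Cm (2*n))$1$2)
        ((Cm (2*n))$2$1) ((Cm (2*n))$2$2) ** mk (lam ^ n) 0 0 (mu ^ n)"
      by (subst (2) mk_eta) (rule refl)
    also have "\<dots> = mk ((Cm (2*n))$1$1) (mu ^ n * mu ^ n * (Cm (2*n))$1$2)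
      (lam ^ n * lam ^ n * (Cm (2*n))$2$1) ((Cm (2*n))$2$2)"
      using lmn[of n] by (simp add: mk_mult algebra_simps lmn2)
    finally have e: "gi ** W' n ** g = mk ((Cm (2*n))$1$1) (mu ^ n * mu ^ n * (Cm (2*n))$1$2)
      (lam ^ n * lam ^ n * (Cm (2*n))$2$1) ((Cm (2*n))$2$2)" .
    show ?thesis unfolding c2 e wconj ..
  qed
  have C21': "N ((gi' ** b ** g' - mat 1)$1$2) = d"
  proof -
    have "gi' ** b ** g' - mat 1 = w ** (gi ** b ** g) ** w - w ** mat 1 ** w" unfolding c2 using ww by simp
    also have "\<dots> = w ** (gi ** b ** g - mat 1) ** w" by (simp add: mdiff_rdistrib mdiff_ldistrib)
    finally have "(gi' ** b ** g' - mat 1)$1$2 = (gi ** b ** g - mat 1)$2$1"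
      by (subst (asm) mk_eta[of "gi ** b ** g - mat 1"]) (simp add: wconj)
    thus ?thesis using C21 by simp
  qed
  have lo0: "\<exists>s0. s0 \<noteq> 0 \<and> g' ** mk 1 s0 0 1 ** gi' \<in> closure G"
  proof (rule limit_unip[OF gg2 WG' d(1) C21'])
    fix n
    show "N ((gi' ** W' n ** g')$1$1 - 1) \<le> d / real p ^ n" using E22[of n] by (simp add: We')
    show "N ((gi' ** W' n ** g')$2$2 - 1) \<le> d / real p ^ n" using E11[of n] by (simp add: We')
    have "N ((gi' ** W' n ** g')$2$1) = d / real p ^ (2*n) / real p ^ (2*n)"
      using E12[of n] Nm2[of n] by (simp add: We' N_mult)
    also have "\<dots> \<le> d / real p ^ (2*n)" using pos[of "2*n"] d p_real
      by (simp add: divide_le_eq one_le_power)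
    finally show "N ((gi' ** W' n ** g')$2$1) \<le> d / real p ^ n" using dle[of n] by linarith
    show "N ((gi' ** W' n ** g')$1$2) = d" using E21[of n] Nl2[of n] pos[of "2*n"]
      by (simp add: We' N_mult)
  qed
  then obtain s1 where s1: "s1 \<noteq> 0" "g' ** mk 1 s1 0 1 ** gi' \<in> closure G" by blast
  have LO: "g ** mk 1 0 x 1 ** gi \<in> closure G" for x
  proof -
    have "g' ** mk 1 x 0 1 ** gi' \<in> closure G"
      by (rule full_T[OF Gm G1 gg2 gg2' aiG aG ad2 aid2 lm Nl s1])
    moreover have "g' ** mk 1 x 0 1 ** gi' = g ** (w ** mk 1 x 0 1 ** w) ** gi"
      unfolding g'_def gi'_def by (simp add: matrix_mul_assoc)
    ultimately show ?thesis by (simp add: wconj)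
  qed
  have clm: "A \<in> closure G \<Longrightarrow> B \<in> closure G \<Longrightarrow> A ** B \<in> closure G" for A B
    by (rule closure_mult[OF Gm])
  show ?thesis
  proof
    fix X :: "'a^2^2" assume "X \<in> SL2"
    hence dX: "det X = 1" by (simp add: SL2_def)
    define Z where "Z = gi ** X ** g"
    have "det Z = det gi * det X * det g" unfolding Z_def by (simp add: det_mul)
    also have "\<dots> = det (gi ** g)" using dX by (simp add: det_mul)
    finally have "det Z = 1" using gg' by simp
    hence "Z$1$1 * Z$2$2 - Z$1$2 * Z$2$1 = 1" by (simp add: det_2)
    then obtain e1 a1 b1 c1 where dec: "mk (Z$1$1) (Z$1$2) (Z$2$1) (Z$2$2)
        = mk 1 0 e1 1 ** mk 1 a1 0 1 ** mk 1 0 b1 1 ** mk 1 c1 0 1"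
      using sl2_decomp by blast
    have "X = g ** Z ** gi" unfolding Z_def using conj_back[OF gg] by simp
    also have "\<dots> = g ** (mk 1 0 e1 1 ** mk 1 a1 0 1 ** mk 1 0 b1 1 ** mk 1 c1 0 1) ** gi"
      using dec mk_eta[of Z] by simp
    also have "\<dots> = (g ** mk 1 0 e1 1 ** gi) ** (g ** mk 1 a1 0 1 ** gi) ** (g ** mk 1 0 b1 1 ** gi)
        ** (g ** mk 1 c1 0 1 ** gi)"
      by (simp add: conj_mult[OF gg'])
    finally show "X \<in> closure G" using clm UP LO by metis
  qed
qed

end


context pad begin

lemma entry_le_dist: "N (X$i$j - Y$i$j) \<le> dist X Y"
proof -
  have "N (X$i$j - Y$i$j) = dist (X$i$j) (Y$i$j)" by (simp add: dist_N)
  also have "\<dots> \<le> dist (X$i) (Y$i)" by (rule dist_vec_nth_le)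
  also have "\<dots> \<le> dist X Y" by (rule dist_vec_nth_le)
  finally show ?thesis .
qed

lemma mn_le_dist: "mn (X - Y) \<le> dist X Y"
  by (rule mn_le) (simp add: entry_le_dist)

lemma approx_in: assumes "SL2 \<subseteq> closure H" "X \<in> SL2" "e > 0" shows "\<exists>h\<in>H. dist h X < e"
  using assms closure_approachable by blast

lemma p_inv_lt1: "1 / real p < 1" using p_real by simp

lemma fixed_point:
  assumes Nt: "N t = real p"
  shows "\<exists>l. N (l - t) \<le> 1 / real p \<and> t - inverse l = l"
proof -
  define S where "S = {x. N (x - t) \<le> 1 / real p}"
  have S_eq: "S = cball t (1 / real p)" unfolding S_def by (auto simp: cball_def dist_N N_sym)
  have cS: "complete S" unfolding S_eq using complete_closed_subset[OF closed_cball _ compl] by simp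
  have tS: "t \<in> S" unfolding S_def using p_real by simp
  have Nx: "x \<in> S \<Longrightarrow> N x = real p" for x
  proof -
    assume "x \<in> S"
    hence "N (x - t) < N t" unfolding S_def mem_Collect_eq using Nt p_real p_inv_lt1 by linarith
    thus "N x = real p" using N_strict[of "x - t" t] Nt by simp
  qed
  define f where "f x = t - inverse x" for x
  have fS: "f ` S \<subseteq> S"
  proof
    fix y assume "y \<in> f ` S"
    then obtain x where x: "x \<in> S" "y = f x" by blast
    have "N (y - t) = N (inverse x)" unfolding x f_def by simp
    also have "\<dots> = 1 / real p" using Nx[OF x(1)] by (simp add: N_inverse N_divide inverse_eq_divide)
    finally show "y \<in> S" unfolding S_def by simp
  qed
  have lip: "dist (f x) (f y) \<le> (1 / (real p * real p)) * dist x y" if "x \<in> S" "y \<in> S" for x y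
  proof -
    have xnz: "x \<noteq> 0" and ynz: "y \<noteq> 0" using Nx[OF that(1)] Nx[OF that(2)] p_real by auto
    have "f x - f y = (x - y) / (x * y)" unfolding f_def using xnz ynz by (simp add: field_simps)
    hence "dist (f x) (f y) = N (x - y) / (real p * real p)"
      by (simp add: dist_N N_divide N_mult Nx that)
    thus ?thesis by (simp add: dist_N)
  qed
  have pp: "1 < real p * real p" using p_real less_1_mult by blast
  have c: "0 \<le> 1 / (real p * real p)" "1 / (real p * real p) < 1" using pp by auto
  obtain l where "l \<in> S" "f l = l" using Banach_fix[OF cS _ c fS lip] tS by blast
  thus ?thesis unfolding S_def f_def by blast
qed

end


lemma sg_mult: "X \<in> subgroup_generated_SL2 S \<Longrightarrow> Y \<in> subgroup_generated_SL2 S \<Longrightarrow> X ** Y \<in> subgroup_generated_SL2 S"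
  unfolding subgroup_generated_SL2_def is_subgroup_SL2_def by blast

lemma sg_one: "mat 1 \<in> subgroup_generated_SL2 S"
  unfolding subgroup_generated_SL2_def is_subgroup_SL2_def by blast

lemma sg_gen: "x \<in> S \<Longrightarrow> x \<in> subgroup_generated_SL2 S"
  unfolding subgroup_generated_SL2_def by blast

lemma sg_inv:
  assumes "x \<in> S" "xi ** x = (mat 1 :: 'a::field^2^2)"
  shows "xi \<in> subgroup_generated_SL2 S"
  unfolding subgroup_generated_SL2_def
proof (intro InterI, clarify)
  fix K assume K: "is_subgroup_SL2 K" "S \<subseteq> K"
  then obtain B where B: "B \<in> K" "x ** B = mat 1" using assms(1) unfolding is_subgroup_SL2_def by blast
  have "xi = xi ** (x ** B)" using B by simp
  also have "\<dots> = B" using assms(2) by (simp add: matrix_mul_assoc)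
  finally show "xi \<in> K" using B by simp
qed

lemma inv2:
  fixes x y u v D :: "'a::field"
  assumes hD: "x * y - u * v = D" and Dnz: "D \<noteq> 0"
  shows "mk x u v y ** mk (y/D) (-u/D) (-v/D) (x/D) = mat 1"
    and "mk (y/D) (-u/D) (-v/D) (x/D) ** mk x u v y = mat 1"
proof -
  have a0: "x * (y / D) + u * (- v / D) = 1" using Dnz hD by (simp add: divide_simps algebra_simps)
  have a1: "v * (y / D) + y * (- v / D) = 0" by (simp add: divide_simps algebra_simps)
  have a2: "x * (- u / D) + u * (x / D) = 0" by (simp add: divide_simps algebra_simps)
  have a3: "v * (- u / D) + y * (x / D) = 1" using Dnz hD by (simp add: divide_simps algebra_simps)
  have a4: "y / D * x + - u / D * v = 1" using Dnz hD by (simp add: divide_simps algebra_simps)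
  have a5: "y / D * u + - u / D * y = 0" by (simp add: divide_simps algebra_simps)
  have a6: "- v / D * x + x / D * v = 0" by (simp add: divide_simps algebra_simps)
  have a7: "- v / D * u + x / D * y = 1" using Dnz hD by (simp add: divide_simps algebra_simps)
  note a = a0 a1 a2 a3 a4 a5 a6 a7
  show "mk x u v y ** mk (y/D) (-u/D) (-v/D) (x/D) = mat 1" unfolding mk_mult a mat1_mk by (rule refl)
  show "mk (y/D) (-u/D) (-v/D) (x/D) ** mk x u v y = mat 1" unfolding mk_mult a mat1_mk by (rule refl)
qed

context pad begin

lemma final:
  fixes H :: "('a^2^2) set"
  assumes Hs: "is_subgroup_SL2 H" and dense: "SL2 \<subseteq> closure H"
  shows "\<exists>a\<in>H. \<exists>b\<in>H. SL2 \<subseteq> closure (subgroup_generated_SL2 {a, b})"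
proof -
  have HS: "H \<subseteq> SL2" using Hs unfolding is_subgroup_SL2_def by blast
  have pnz: "(of_nat p :: 'a) \<noteq> 0" using p_gt1 by simp
  define P where "P = inverse (of_nat p :: 'a)"
  have NP: "N P = real p" unfolding P_def using p_real by (simp add: N_inverse N_p)
  define A0 where "A0 = mk P 0 0 (of_nat p)"
  have A0S: "A0 \<in> SL2" unfolding A0_def SL2_def P_def using pnz by (simp add: det_mk)
  obtain a where aH: "a \<in> H" and da: "dist a A0 < 1" using approx_in[OF dense A0S, of 1] by auto
  define a11 where "a11 = a$1$1"
  define a12 where "a12 = a$1$2"
  define a21 where "a21 = a$2$1"
  define a22 where "a22 = a$2$2"
  have amk: "a = mk a11 a12 a21 a22" unfolding a11_def a12_def a21_def a22_def by (rule mk_eta)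
  have deta: "a11 * a22 - a12 * a21 = 1" using aH HS unfolding SL2_def by (auto simp: amk det_mk)
  have e11: "N (a11 - P) < 1" using entry_le_dist[of a 1 1 A0] da unfolding a11_def A0_def by simp
  have e22: "N (a22 - of_nat p) < 1" using entry_le_dist[of a 2 2 A0] da unfolding a22_def A0_def by simp
  have e12: "N a12 < 1" using entry_le_dist[of a 1 2 A0] da unfolding a12_def A0_def by simp
  have e21: "N a21 < 1" using entry_le_dist[of a 2 1 A0] da unfolding a21_def A0_def by simp
  have p1: "1 < real p" by (rule p_real)
  have Na11: "N a11 = real p"
    using N_strict[of "a11 - P" P] e11 NP p1 by simp
  have Na22: "N a22 < 1"
  proof -
    have "N a22 = N ((a22 - of_nat p) + of_nat p)" by simp
    also have "\<dots> \<le> max (N (a22 - of_nat p)) (N (of_nat p))" by (rule N_ultra)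
    finally show ?thesis using e22 N_p p_inv_lt1 by simp
  qed
  define t where "t = a11 + a22"
  have Nt: "N t = real p" unfolding t_def using N_strict'[of a22 a11] Na11 Na22 p1 by simp
  obtain lam where l1: "N (lam - t) \<le> 1 / real p" and l2: "t - inverse lam = lam"
    using fixed_point[OF Nt] by blast
  have Nlam: "N lam = real p"
    using N_strict[of "lam - t" t] l1 Nt p_inv_lt1 p1 by simp
  have lnz: "lam \<noteq> 0" using Nlam p1 by auto
  define mu where "mu = inverse lam"
  have lm: "lam * mu = 1" unfolding mu_def using lnz by simp
  have Nmu: "N mu = 1 / real p" unfolding mu_def by (simp add: N_inverse N_divide Nlam inverse_eq_divide)
  have tl: "a11 + a22 = lam + mu" using l2 unfolding t_def mu_def by (simp add: algebra_simps)
  define D where "D = (lam - a22) * (mu - a11) - a12 * a21"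
  have N1: "N (lam - a22) = real p" using N_strict'[of "- a22" lam] Na22 Nlam p1 by simp
  have N2: "N (mu - a11) = real p" using N_strict'[of mu "- a11"] Nmu Na11 p1 p_inv_lt1 by simp
  have N3: "N (a12 * a21) < 1"
  proof -
    have "N a12 * N a21 \<le> N a12" using e21 N_nonneg[of a12] N_nonneg[of a21]
      using mult_left_mono[of "N a21" 1 "N a12"] by simp
    thus ?thesis using e12 by (simp add: N_mult)
  qed
  have pp: "1 < real p * real p" using p1 less_1_mult by blast
  have ND: "N D = real p * real p"
    unfolding D_def using N_strict'[of "- (a12 * a21)" "(lam - a22) * (mu - a11)"] N1 N2 N3 pp
    by (simp add: N_mult)
  have Dnz: "D \<noteq> 0" using ND pp by auto
  define g where "g = mk (lam - a22) a12 a21 (mu - a11)"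
  define gi where "gi = mk ((mu - a11) / D) (- a12 / D) (- a21 / D) ((lam - a22) / D)"
  have hD: "(lam - a22) * (mu - a11) - a12 * a21 = D" unfolding D_def ..
  have gg: "g ** gi = mat 1" unfolding g_def gi_def by (rule inv2(1)[OF hD Dnz])
  have gg': "gi ** g = mat 1" unfolding g_def gi_def by (rule inv2(2)[OF hD Dnz])
  have ag: "a ** g = g ** mk lam 0 0 mu"
    unfolding amk g_def mk_mult mk_eq_iff
  proof (intro conjI)
    have a22e: "a22 = lam + mu - a11" using tl by (simp add: algebra_simps)
    have a1221: "a12 * a21 = a11 * a22 - 1" using deta by (simp add: algebra_simps)
    show "a11 * (lam - a22) + a12 * a21 = (lam - a22) * lam + a12 * 0"
      unfolding a1221 a22e using lm by (simp add: algebra_simps)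
    show "a11 * a12 + a12 * (mu - a11) = (lam - a22) * 0 + a12 * mu" by (simp add: algebra_simps)
    show "a21 * (lam - a22) + a22 * a21 = a21 * lam + (mu - a11) * 0" by (simp add: algebra_simps)
    show "a21 * a12 + a22 * (mu - a11) = a21 * 0 + (mu - a11) * mu"
      using lm a22e a1221 by (simp add: algebra_simps) (simp add: a22e algebra_simps power2_eq_square)
  qed
  have gad: "gi ** a ** g = mk lam 0 0 mu"
    by (metis ag gg' matrix_mul_assoc matrix_mul_lid)
  define ai where "ai = g ** mk mu 0 0 lam ** gi"
  have gaid: "gi ** ai ** g = mk mu 0 0 lam" unfolding ai_def
    by (metis gg' matrix_mul_assoc matrix_mul_lid matrix_mul_rid)
  have aback: "a = g ** mk lam 0 0 mu ** gi" using conj_back[OF gg, of a] gad by simp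
  have aia: "ai ** a = mat 1"
  proof -
    have "ai ** a = g ** (mk mu 0 0 lam ** mk lam 0 0 mu) ** gi" unfolding ai_def aback conj_mult[OF gg'] ..
    also have "mk mu 0 0 lam ** mk lam 0 0 mu = mat 1" using lm by (simp add: mk_mult mat1_mk mult.commute)
    finally show ?thesis using gg by simp
  qed
  define eps where "eps = (of_nat p :: 'a) ^ 2"
  define d where "d = 1 / real p ^ 2"
  have Neps: "N eps = d" unfolding eps_def d_def by (rule N_p_pow)
  have dpos: "0 < d" unfolding d_def using p1 by simp
  have d1: "d < 1 / real p" unfolding d_def using p1
    by (simp add: power2_eq_square divide_less_eq)
  have dle1: "d \<le> 1" using d1 p_inv_lt1 by linarith
  define b0 where "b0 = mk (1 + eps * eps) eps eps 1"
  define B0 where "B0 = g ** b0 ** gi"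
  have "det B0 = det g * det gi * det b0" unfolding B0_def by (simp add: det_mul)
  also have "det g * det gi = 1" using gg by (metis det_I det_mul)
  finally have "B0 \<in> SL2" unfolding SL2_def b0_def by (simp add: det_mk)
  define K where "K = mn gi * mn g"
  have K0: "0 \<le> K" unfolding K_def using mn_nonneg by simp
  define eta where "eta = d / (K + 1)"
  have eta: "eta > 0" unfolding eta_def using dpos K0 by simp
  obtain b where bH: "b \<in> H" and db: "dist b B0 < eta" using approx_in[OF dense \<open>B0 \<in> SL2\<close> eta] by blast
  define C where "C = gi ** b ** g"
  have Cb0: "C - b0 = gi ** (b - B0) ** g"
  proof -
    have "gi ** B0 ** g = b0" unfolding B0_def by (metis gg' matrix_mul_assoc matrix_mul_lid matrix_mul_rid)
    thus ?thesis unfolding C_def by (simp add: mdiff_rdistrib mdiff_ldistrib)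
  qed
  have mCb: "mn (C - b0) < d"
  proof -
    have "mn (C - b0) \<le> mn (gi ** (b - B0)) * mn g" unfolding Cb0 by (rule mn_mult)
    also have "\<dots> \<le> (mn gi * mn (b - B0)) * mn g" using mn_mult mn_nonneg by (intro mult_right_mono) auto
    also have "\<dots> \<le> (mn gi * eta) * mn g"
      using mn_le_dist[of b B0] db mn_nonneg by (intro mult_right_mono mult_left_mono) auto
    also have "\<dots> = eta * K" unfolding K_def by simp
    also have "\<dots> < eta * (K + 1)" using eta by simp
    also have "\<dots> = d" unfolding eta_def using K0 by simp
    finally show ?thesis .
  qed
  have Cm1: "C - mat 1 = (C - b0) + mk (eps * eps) eps eps 0"
    unfolding b0_def mat1_mk by (simp add: vec_eq_iff mk_def forall_2)
  have C12: "N ((gi ** b ** g - mat 1)$1$2) = d"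
  proof -
    have "(gi ** b ** g - mat 1)$1$2 = (C - b0)$1$2 + eps" unfolding C_def[symmetric] Cm1 by simp
    thus ?thesis using N_strict[of "(C - b0)$1$2" eps] entry_le_mn[of "C - b0" 1 2] mCb Neps by simp
  qed
  have C21: "N ((gi ** b ** g - mat 1)$2$1) = d"
  proof -
    have "(gi ** b ** g - mat 1)$2$1 = (C - b0)$2$1 + eps" unfolding C_def[symmetric] Cm1 by simp
    thus ?thesis using N_strict[of "(C - b0)$2$1" eps] entry_le_mn[of "C - b0" 2 1] mCb Neps by simp
  qed
  have C1: "mn (gi ** b ** g - mat 1) \<le> d"
  proof -
    have "mn (mk (eps * eps) eps eps 0) \<le> d"
    proof (rule mn_le)
      fix i j :: 2
      have "N (eps * eps) \<le> d" using Neps dpos dle1 by (simp add: N_mult mult_le_one)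
      thus "N (mk (eps * eps) eps eps 0 $ i $ j) \<le> d" using exhaust_2[of i] exhaust_2[of j] Neps dpos by auto
    qed
    thus ?thesis unfolding C_def[symmetric] Cm1 using mn_add[of "C - b0" "mk (eps * eps) eps eps 0"] mCb by linarith
  qed
  define G where "G = subgroup_generated_SL2 {a, b}"
  have Gm: "\<And>X Y. X \<in> G \<Longrightarrow> Y \<in> G \<Longrightarrow> X ** Y \<in> G" unfolding G_def by (rule sg_mult)
  have G1: "mat 1 \<in> G" unfolding G_def by (rule sg_one)
  have aG: "a \<in> G" unfolding G_def by (rule sg_gen) simp
  have bG: "b \<in> G" unfolding G_def by (rule sg_gen) simp
  have aiG: "ai \<in> G" unfolding G_def by (rule sg_inv[OF _ aia]) simp
  have "SL2 \<subseteq> closure G"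
    by (rule main_setup[OF Gm G1 gg gg' aG aiG gad gaid lm Nlam bG C1 C12 C21 dpos d1])
  thus ?thesis unfolding G_def using aH bH by blast
qed

end

theorem proposition1p7:
  fixes p :: nat
    and N :: "'a::{field_char_0, metric_space} \<Rightarrow> real"
    and H :: "('a ^ 2 ^ 2) set"
  assumes "prime p"
    and "is_padic_field p N"
    and "is_subgroup_SL2 H"
    and "SL2 \<subseteq> closure H"
  shows "\<exists>a\<in>H. \<exists>b\<in>H. SL2 \<subseteq> closure (subgroup_generated_SL2 {a, b})"
proof -
  interpret pad p N by (unfold_locales) (rule assms(1), rule assms(2))
  show ?thesis by (rule final[OF assms(3) assms(4)])
qed

end
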